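(* Let $(a(i))_{i\in\mathbb N}$ be a stationary process taking values in a finite set $S=\{s_1,\dots,s_N\}\subset\mathbb R$, $N\ge2$, with $\mathbb E[a(1)]=0$, satisfying: there are $C>0$, $\alpha\in[0,1)$ such that for all $k\in\mathbb N$, $2\le l\le k$ and $i_1\le\dots\le i_k$, $$\max_{j_1,\dots,j_k}\Big|\mathbb P\big(a(i_k)=s_{j_k},\dots,a(i_l)=s_{j_l}\,\big|\,a(i_{l-1})=s_{j_{l-1}},\dots,a(i_1)=s_{j_1}\big)-\mathbb P\big(a(i_k)=s_{j_k},\dots,a(i_l)=s_{j_l}\big)\Big|\le C\alpha^{i_l-i_{l-1}}.$$ Assume in addition that $\mathbb E[a(i_1)\cdots a(i_r)]=0$ for every odd $r\in\mathbb N$ and all $(i_1,\dots,i_r)\in\mathbb N^r$. Then for every $k\in\mathbb N$ there is a constant $C_k$ such that for all $i_1\le\dots\le i_{2k}$, $$\big|\mathbb E[a(i_1)\cdots a(i_{2k})]\big|\le C_k\,\alpha^{\max\{i_{2l}-i_{2l-1}:\,l=1,\dots,k\}}\le C_k\prod_{l=1}^k\big(\alpha^{1/k}\big)^{i_{2l}-i_{2l-1}}.$$ *)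

theory Defs
  imports "HOL-Probability.Probability"
begin

text \<open>Index set is {1,2,...}. A discrete (finite-valued) process is stationary iff all
finite-dimensional cylinder probabilities are shift invariant.\<close>
definition stationary_proc :: "'a measure \<Rightarrow> (nat \<Rightarrow> 'a \<Rightarrow> real) \<Rightarrow> bool" where
  "stationary_proc M a \<longleftrightarrow>
     (\<forall>(is :: nat list) (vs :: real list) (h :: nat).
        length is = length vs \<longrightarrow> (\<forall>i\<in>set is. 1 \<le> i) \<longrightarrow>
        measure M {\<omega>\<in>space M. \<forall>t<length is. a (is ! t) \<omega> = vs ! t}
      = measure M {\<omega>\<in>space M. \<forall>t<length is. a (is ! t + h) \<omega> = vs ! t})"

text \<open>Conditional probability P(A | B) = P(A \<inter> B) / P(B), used only when P(B) > 0.\<close>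
definition condP :: "'a measure \<Rightarrow> 'a set \<Rightarrow> 'a set \<Rightarrow> real" where
  "condP M A B = measure M (A \<inter> B) / measure M B"

definition mixing_cond :: "'a measure \<Rightarrow> (nat \<Rightarrow> 'a \<Rightarrow> real) \<Rightarrow> real set \<Rightarrow> real \<Rightarrow> real \<Rightarrow> bool" where
  "mixing_cond M a S C \<alpha> \<longleftrightarrow>
     (\<forall>(k::nat) (l::nat) (i :: nat \<Rightarrow> nat) (v :: nat \<Rightarrow> real).
        2 \<le> l \<longrightarrow> l \<le> k \<longrightarrow> 1 \<le> i 1 \<longrightarrow> (\<forall>t. 1 \<le> t \<longrightarrow> t < k \<longrightarrow> i t \<le> i (t + 1)) \<longrightarrow>
        (\<forall>t\<in>{1..k}. v t \<in> S) \<longrightarrow>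
        (let A = {\<omega>\<in>space M. \<forall>t\<in>{l..k}. a (i t) \<omega> = v t};
             B = {\<omega>\<in>space M. \<forall>t\<in>{1..l-1}. a (i t) \<omega> = v t}
         in measure M B > 0 \<longrightarrow>
            \<bar>condP M A B - measure M A\<bar> \<le> C * \<alpha> ^ (i l - i (l - 1))))"

end

theory Submission
  imports Defs
begin


lemma prod_decomp:
  fixes f :: "nat \<Rightarrow> real"
  assumes "finite S" "finite T" "\<And>t. t \<in> T \<Longrightarrow> f t \<in> S"
  shows "(\<Prod>t\<in>T. f t) = (\<Sum>u\<in>PiE T (\<lambda>_. S). (\<Prod>t\<in>T. u t) * (if (\<forall>t\<in>T. f t = u t) then 1 else 0))"
proof -
  have "(\<Prod>t\<in>T. f t) = (\<Prod>t\<in>T. \<Sum>s\<in>S. s * (if f t = s then 1 else 0))"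
  proof (intro prod.cong refl)
    fix t assume "t \<in> T"
    have "(\<Sum>s\<in>S. s * (if f t = s then 1 else 0)) = (\<Sum>s\<in>S. (if f t = s then f t else 0))"
      by (intro sum.cong) auto
    also have "\<dots> = f t" using assms \<open>t \<in> T\<close> by (simp add: sum.delta)
    finally show "f t = (\<Sum>s\<in>S. s * (if f t = s then 1 else 0))" by simp
  qed
  also have "\<dots> = (\<Sum>u\<in>PiE T (\<lambda>_. S). \<Prod>t\<in>T. u t * (if f t = u t then 1 else 0))"
    using assms by (simp add: prod_sum_PiE)
  also have "\<dots> = (\<Sum>u\<in>PiE T (\<lambda>_. S). (\<Prod>t\<in>T. u t) * (if (\<forall>t\<in>T. f t = u t) then 1 else 0))"
  proof (intro sum.cong refl)
    fix u
    have "(\<Prod>t\<in>T. u t * (if f t = u t then 1 else 0)) = (\<Prod>t\<in>T. u t) * (\<Prod>t\<in>T. (if f t = u t then 1 else (0::real)))"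
      by (simp add: prod.distrib)
    also have "(\<Prod>t\<in>T. (if f t = u t then 1 else (0::real))) = (if (\<forall>t\<in>T. f t = u t) then 1 else 0)"
      using assms(2) by (auto simp: prod_zero_iff)
    finally show "(\<Prod>t\<in>T. u t * (if f t = u t then 1 else 0)) = (\<Prod>t\<in>T. u t) * (if (\<forall>t\<in>T. f t = u t) then 1 else 0)" .
  qed
  finally show ?thesis .
qed

lemma sum_abs_PiE:
  assumes "finite (S::real set)" "finite T"
  shows "(\<Sum>u\<in>PiE T (\<lambda>_. S). \<bar>\<Prod>t\<in>T. u t\<bar>) = (\<Sum>s\<in>S. \<bar>s\<bar>) ^ card T"
proof -
  have "(\<Sum>u\<in>PiE T (\<lambda>_. S). \<bar>\<Prod>t\<in>T. u t\<bar>) = (\<Sum>u\<in>PiE T (\<lambda>_. S). \<Prod>t\<in>T. \<bar>u t\<bar>)"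
    by (simp add: abs_prod)
  also have "\<dots> = (\<Prod>t\<in>T. \<Sum>s\<in>S. \<bar>s\<bar>)"
    using prod_sum_PiE[of T "\<lambda>_. S" "\<lambda>_ s. \<bar>s\<bar>"] assms by simp
  finally show ?thesis by simp
qed

lemma cov_bound:
  assumes "prob_space M" "A \<in> sets M" "B \<in> sets M" "e \<ge> 0"
    and "measure M B > 0 \<Longrightarrow> \<bar>condP M A B - measure M A\<bar> \<le> e"
  shows "\<bar>measure M (B \<inter> A) - measure M B * measure M A\<bar> \<le> e"
proof -
  interpret P: prob_space M by fact
  show ?thesis
  proof (cases "measure M B = 0")
    case True
    have "measure M (B \<inter> A) \<le> measure M B" using assms by (intro P.finite_measure_mono) auto
    then have "measure M (B \<inter> A) = 0" using True by (simp add: antisym)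
    then show ?thesis using True assms by simp
  next
    case False
    then have pos: "measure M B > 0" by (simp add: order_le_neq_trans)
    have "measure M (B \<inter> A) - measure M B * measure M A = measure M B * (condP M A B - measure M A)"
      using pos by (simp add: condP_def field_simps Int_commute)
    then have "\<bar>measure M (B \<inter> A) - measure M B * measure M A\<bar> = measure M B * \<bar>condP M A B - measure M A\<bar>"
      by (simp add: abs_mult)
    also have "\<dots> \<le> 1 * e"
      using assms(5)[OF pos] by (intro mult_mono) auto
    finally show ?thesis by simp
  qed
qed




theorem mainTheorem6:
  fixes M :: "'a measure" and a :: "nat \<Rightarrow> 'a \<Rightarrow> real" and S :: "real set"
    and C \<alpha> :: real
  assumes "prob_space M"
    and "\<And>n. 1 \<le> n \<Longrightarrow> a n \<in> borel_measurable M"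
    and "finite S" and "card S \<ge> 2"
    and "\<And>n \<omega>. 1 \<le> n \<Longrightarrow> \<omega> \<in> space M \<Longrightarrow> a n \<omega> \<in> S"
    and "stationary_proc M a"
    and "integral\<^sup>L M (a 1) = 0"
    and "C > 0" and "0 \<le> \<alpha>" and "\<alpha> < 1"
    and "mixing_cond M a S C \<alpha>"
    and "\<And>(r::nat) (i::nat \<Rightarrow> nat). odd r \<Longrightarrow> (\<forall>t\<in>{1..r}. 1 \<le> i t) \<Longrightarrow>
           integral\<^sup>L M (\<lambda>\<omega>. \<Prod>t\<in>{1..r}. a (i t) \<omega>) = 0"
  shows "\<forall>k::nat. 1 \<le> k \<longrightarrow> (\<exists>Ck::real. \<forall>i::nat \<Rightarrow> nat.
           1 \<le> i 1 \<longrightarrow> (\<forall>t. 1 \<le> t \<longrightarrow> t < 2 * k \<longrightarrow> i t \<le> i (t + 1)) \<longrightarrow>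
           \<bar>integral\<^sup>L M (\<lambda>\<omega>. \<Prod>t\<in>{1..2*k}. a (i t) \<omega>)\<bar>
              \<le> Ck * \<alpha> ^ Max ((\<lambda>l. i (2*l) - i (2*l - 1)) ` {1..k})
           \<and> Ck * \<alpha> ^ Max ((\<lambda>l. i (2*l) - i (2*l - 1)) ` {1..k})
              \<le> Ck * (\<Prod>l\<in>{1..k}. (\<alpha> powr (1 / real k)) ^ (i (2*l) - i (2*l - 1))))"
  proof (intro allI impI)
  fix k :: nat assume k: "1 \<le> k"
  interpret P: prob_space M by fact
  note meas = assms(2) and vals = assms(5) and mix = assms(11)[unfolded mixing_cond_def]
  define K where "K = (\<Sum>s\<in>S. \<bar>s\<bar>)"
  have K0: "K \<ge> 0" unfolding K_def by (simp add: sum_nonneg)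
  have Ck0: "C * K ^ (2*k) \<ge> 0" using K0 assms(8) by simp
  show "\<exists>Ck::real. \<forall>i::nat \<Rightarrow> nat.
           1 \<le> i 1 \<longrightarrow> (\<forall>t. 1 \<le> t \<longrightarrow> t < 2 * k \<longrightarrow> i t \<le> i (t + 1)) \<longrightarrow>
           \<bar>integral\<^sup>L M (\<lambda>\<omega>. \<Prod>t\<in>{1..2*k}. a (i t) \<omega>)\<bar>
              \<le> Ck * \<alpha> ^ Max ((\<lambda>l. i (2*l) - i (2*l - 1)) ` {1..k})
           \<and> Ck * \<alpha> ^ Max ((\<lambda>l. i (2*l) - i (2*l - 1)) ` {1..k})
              \<le> Ck * (\<Prod>l\<in>{1..k}. (\<alpha> powr (1 / real k)) ^ (i (2*l) - i (2*l - 1)))"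
  proof (intro exI[of _ "C * K ^ (2*k)"] allI impI)
    fix i :: "nat \<Rightarrow> nat"
    assume i1: "1 \<le> i 1" and imono: "\<forall>t. 1 \<le> t \<longrightarrow> t < 2 * k \<longrightarrow> i t \<le> i (t + 1)"
    define g where "g = (\<lambda>l. i (2*l) - i (2*l - 1))"
    define G where "G = Max (g ` {1..k})"
    have "G \<in> g ` {1..k}" unfolding G_def using k by (intro Max_in) auto
    then obtain l where l: "l \<in> {1..k}" "g l = G" by auto
    have gle: "\<And>j. j \<in> {1..k} \<Longrightarrow> g j \<le> G" unfolding G_def by (intro Max_ge) auto
    have ige: "i 1 \<le> i t" if "1 \<le> t" "t \<le> 2*k" for t
      using that
    proof (induction t)
      case 0 then show ?case by simp
    next
      case (Suc n)
      show ?case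
      proof (cases "n = 0")
        case True then show ?thesis by simp
      next
        case False
        then have "i 1 \<le> i n" using Suc by simp
        also have "i n \<le> i (n+1)" using imono Suc False by simp
        finally show ?thesis by simp
      qed
    qed
    have ige1: "1 \<le> i t" if "1 \<le> t" "t \<le> 2*k" for t using ige[OF that] i1 by simp
    define p where "p = 2*l"
    have p2: "2 \<le> p" and pk: "p \<le> 2*k" using l by (auto simp: p_def)
    define T1 where "T1 = {1..p-1}"
    define T2 where "T2 = {p..2*k}"
    have split: "{1..2*k} = T1 \<union> T2" and disj: "T1 \<inter> T2 = {}"
      using p2 pk by (auto simp: T1_def T2_def)
    have fin12: "finite T1" "finite T2" by (auto simp: T1_def T2_def)
    have sub12: "T1 \<subseteq> {1..2*k}" "T2 \<subseteq> {1..2*k}" using split by auto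
    have card12: "card T1 + card T2 = 2*k" using p2 pk by (simp add: T1_def T2_def)
    define cyl where "cyl T u = {\<omega>\<in>space M. \<forall>t\<in>T. a (i t) \<omega> = u t}" for T u
    have cyl_sets: "cyl T u \<in> sets M" if "T \<subseteq> {1..2*k}" for T u
      unfolding cyl_def
    proof (intro sets.sets_Collect_finite_All)
      show "finite T" using that finite_subset by blast
      fix t assume "t \<in> T"
      then have m: "a (i t) \<in> borel_measurable M" using meas ige1 that by auto
      have "{\<omega>\<in>space M. a (i t) \<omega> = u t} = a (i t) -` {u t} \<inter> space M" by auto
      also have "\<dots> \<in> sets M" by (rule measurable_sets[OF m]) simp
      finally show "{\<omega>\<in>space M. a (i t) \<omega> = u t} \<in> sets M" .
    qed
    have decomp: "(\<Prod>t\<in>T. a (i t) \<omega>) = (\<Sum>u\<in>PiE T (\<lambda>_. S). (\<Prod>t\<in>T. u t) * indicator (cyl T u) \<omega>)"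
      if "T \<subseteq> {1..2*k}" "\<omega> \<in> space M" for T \<omega>
    proof -
      have fT: "finite T" using that finite_subset by blast
      have "(\<Prod>t\<in>T. a (i t) \<omega>) = (\<Sum>u\<in>PiE T (\<lambda>_. S). (\<Prod>t\<in>T. u t) * (if (\<forall>t\<in>T. a (i t) \<omega> = u t) then 1 else 0))"
        by (rule prod_decomp[OF assms(3) fT]) (use vals ige1 that in auto)
      also have "\<dots> = (\<Sum>u\<in>PiE T (\<lambda>_. S). (\<Prod>t\<in>T. u t) * indicator (cyl T u) \<omega>)"
        using that by (intro sum.cong refl) (simp add: cyl_def indicator_def)
      finally show ?thesis .
    qed
    have fmeas: "emeasure M A < \<infinity>" for A by (simp add: less_top[symmetric])
    have E1: "integral\<^sup>L M (\<lambda>\<omega>. \<Prod>t\<in>T. a (i t) \<omega>) = (\<Sum>u\<in>PiE T (\<lambda>_. S). (\<Prod>t\<in>T. u t) * measure M (cyl T u))"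
      if "T \<subseteq> {1..2*k}" for T
    proof -
      have "integral\<^sup>L M (\<lambda>\<omega>. \<Prod>t\<in>T. a (i t) \<omega>) = integral\<^sup>L M (\<lambda>\<omega>. \<Sum>u\<in>PiE T (\<lambda>_. S). (\<Prod>t\<in>T. u t) * indicator (cyl T u) \<omega>)"
        by (intro Bochner_Integration.integral_cong refl) (simp add: decomp[OF that])
      also have "\<dots> = (\<Sum>u\<in>PiE T (\<lambda>_. S). integral\<^sup>L M (\<lambda>\<omega>. (\<Prod>t\<in>T. u t) * indicator (cyl T u) \<omega>))"
        by (intro Bochner_Integration.integral_sum integrable_mult_right integrable_real_indicator
              cyl_sets[OF that] fmeas)
      also have "\<dots> = (\<Sum>u\<in>PiE T (\<lambda>_. S). (\<Prod>t\<in>T. u t) * measure M (cyl T u))"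
        using cyl_sets[OF that] by (intro sum.cong refl) (simp add: sets.Int_space_eq2)
      finally show ?thesis .
    qed
    define U where "U = PiE T1 (\<lambda>_. S)"
    define W where "W = PiE T2 (\<lambda>_. S)"
    have finUW: "finite U" "finite W" using fin12 assms(3) by (auto simp: U_def W_def finite_PiE)
    have E12: "integral\<^sup>L M (\<lambda>\<omega>. \<Prod>t\<in>{1..2*k}. a (i t) \<omega>)
       = (\<Sum>u\<in>U. \<Sum>w\<in>W. ((\<Prod>t\<in>T1. u t) * (\<Prod>t\<in>T2. w t)) * measure M (cyl T1 u \<inter> cyl T2 w))"
    proof -
      have "integral\<^sup>L M (\<lambda>\<omega>. \<Prod>t\<in>{1..2*k}. a (i t) \<omega>)
          = integral\<^sup>L M (\<lambda>\<omega>. \<Sum>u\<in>U. \<Sum>w\<in>W. ((\<Prod>t\<in>T1. u t) * (\<Prod>t\<in>T2. w t)) * indicator (cyl T1 u \<inter> cyl T2 w) \<omega>)"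
      proof (intro Bochner_Integration.integral_cong refl)
        fix \<omega> assume \<omega>: "\<omega> \<in> space M"
        have "(\<Prod>t\<in>{1..2*k}. a (i t) \<omega>) = (\<Prod>t\<in>T1. a (i t) \<omega>) * (\<Prod>t\<in>T2. a (i t) \<omega>)"
          unfolding split using fin12 disj by (simp add: prod.union_disjoint)
        also have "\<dots> = (\<Sum>u\<in>U. (\<Prod>t\<in>T1. u t) * indicator (cyl T1 u) \<omega>) * (\<Sum>w\<in>W. (\<Prod>t\<in>T2. w t) * indicator (cyl T2 w) \<omega>)"
          unfolding U_def W_def using decomp[OF sub12(1) \<omega>] decomp[OF sub12(2) \<omega>] by simp
        also have "\<dots> = (\<Sum>u\<in>U. \<Sum>w\<in>W. ((\<Prod>t\<in>T1. u t) * (\<Prod>t\<in>T2. w t)) * indicator (cyl T1 u \<inter> cyl T2 w) \<omega>)"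
          by (simp add: sum_product indicator_inter_arith mult_ac)
        finally show "(\<Prod>t\<in>{1..2*k}. a (i t) \<omega>) = \<dots>" .
      qed
      also have "\<dots> = (\<Sum>u\<in>U. \<Sum>w\<in>W. integral\<^sup>L M (\<lambda>\<omega>. ((\<Prod>t\<in>T1. u t) * (\<Prod>t\<in>T2. w t)) * indicator (cyl T1 u \<inter> cyl T2 w) \<omega>))"
      proof -
        have int: "integrable M (\<lambda>\<omega>. c * indicator (cyl T1 u \<inter> cyl T2 w) \<omega>)" for c :: real and u w
          by (intro integrable_mult_right integrable_real_indicator sets.Int cyl_sets sub12 fmeas)
        show ?thesis
          by (subst Bochner_Integration.integral_sum, intro Bochner_Integration.integrable_sum int)
             (intro sum.cong refl Bochner_Integration.integral_sum int)
      qed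
      also have "\<dots> = (\<Sum>u\<in>U. \<Sum>w\<in>W. ((\<Prod>t\<in>T1. u t) * (\<Prod>t\<in>T2. w t)) * measure M (cyl T1 u \<inter> cyl T2 w))"
        using cyl_sets[OF sub12(1)] cyl_sets[OF sub12(2)]
        by (intro sum.cong refl) (simp add: sets.Int_space_eq2 sets.Int)
      finally show ?thesis .
    qed
    have EX: "integral\<^sup>L M (\<lambda>\<omega>. \<Prod>t\<in>T1. a (i t) \<omega>) = 0"
      unfolding T1_def using p2 pk ige1 by (intro assms(12)) (auto simp: p_def)
    have EX': "(\<Sum>u\<in>U. (\<Prod>t\<in>T1. u t) * measure M (cyl T1 u)) = 0"
      using EX E1[OF sub12(1)] by (simp add: U_def)
    have mixb: "\<bar>measure M (cyl T1 u \<inter> cyl T2 w) - measure M (cyl T1 u) * measure M (cyl T2 w)\<bar> \<le> C * \<alpha> ^ G"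
      if u: "u \<in> U" and w: "w \<in> W" for u w
    proof (rule cov_bound[OF assms(1) cyl_sets[OF sub12(2)] cyl_sets[OF sub12(1)]])
      show "0 \<le> C * \<alpha> ^ G" using assms(8,9) by simp
      define v where "v t = (if t < p then u t else w t)" for t
      have vS: "\<forall>t\<in>{1..2*k}. v t \<in> S" using u w unfolding v_def U_def W_def T1_def T2_def by auto
      have mc: "let A = {\<omega>\<in>space M. \<forall>t\<in>{p..2*k}. a (i t) \<omega> = v t};
             B = {\<omega>\<in>space M. \<forall>t\<in>{1..p-1}. a (i t) \<omega> = v t}
         in measure M B > 0 \<longrightarrow>
            \<bar>condP M A B - measure M A\<bar> \<le> C * \<alpha> ^ (i p - i (p - 1))"
        using mix p2 pk i1 imono vS by blast
      have A: "{\<omega>\<in>space M. \<forall>t\<in>{p..2*k}. a (i t) \<omega> = v t} = cyl T2 w"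
        by (auto simp: cyl_def T2_def v_def)
      have B: "{\<omega>\<in>space M. \<forall>t\<in>{1..p-1}. a (i t) \<omega> = v t} = cyl T1 u"
        using p2 by (auto simp: cyl_def T1_def v_def)
      have gp: "i p - i (p - 1) = G" using l by (simp add: g_def p_def)
      show "measure M (cyl T1 u) > 0 \<Longrightarrow> \<bar>condP M (cyl T2 w) (cyl T1 u) - measure M (cyl T2 w)\<bar> \<le> C * \<alpha> ^ G"
        using mc unfolding A B gp Let_def by blast
    qed
    have main: "\<bar>integral\<^sup>L M (\<lambda>\<omega>. \<Prod>t\<in>{1..2*k}. a (i t) \<omega>)\<bar> \<le> C * K ^ (2*k) * \<alpha> ^ G"
    proof -
      let ?pu = "\<lambda>u. \<Prod>t\<in>T1. u t" and ?pw = "\<lambda>w. \<Prod>t\<in>T2. w t"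
      have "integral\<^sup>L M (\<lambda>\<omega>. \<Prod>t\<in>{1..2*k}. a (i t) \<omega>)
          = (\<Sum>u\<in>U. \<Sum>w\<in>W. (?pu u * ?pw w) * measure M (cyl T1 u \<inter> cyl T2 w))
            - (\<Sum>u\<in>U. ?pu u * measure M (cyl T1 u)) * (\<Sum>w\<in>W. ?pw w * measure M (cyl T2 w))"
        using E12 EX' by simp
      also have "\<dots> = (\<Sum>u\<in>U. \<Sum>w\<in>W. (?pu u * ?pw w) *
            (measure M (cyl T1 u \<inter> cyl T2 w) - measure M (cyl T1 u) * measure M (cyl T2 w)))"
        by (simp add: sum_product sum_subtractf[symmetric] right_diff_distrib mult_ac)
      finally have eq: "integral\<^sup>L M (\<lambda>\<omega>. \<Prod>t\<in>{1..2*k}. a (i t) \<omega>) = \<dots>" .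
      have "\<bar>\<dots>\<bar> \<le> (\<Sum>u\<in>U. \<Sum>w\<in>W. \<bar>?pu u * ?pw w\<bar> * (C * \<alpha> ^ G))"
      proof -
        have "\<bar>(\<Sum>u\<in>U. \<Sum>w\<in>W. (?pu u * ?pw w) *
            (measure M (cyl T1 u \<inter> cyl T2 w) - measure M (cyl T1 u) * measure M (cyl T2 w)))\<bar>
            \<le> (\<Sum>u\<in>U. \<bar>\<Sum>w\<in>W. (?pu u * ?pw w) *
            (measure M (cyl T1 u \<inter> cyl T2 w) - measure M (cyl T1 u) * measure M (cyl T2 w))\<bar>)"
          by (rule sum_abs)
        also have "\<dots> \<le> (\<Sum>u\<in>U. \<Sum>w\<in>W. \<bar>(?pu u * ?pw w) *
            (measure M (cyl T1 u \<inter> cyl T2 w) - measure M (cyl T1 u) * measure M (cyl T2 w))\<bar>)"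
          by (intro sum_mono sum_abs)
        also have "\<dots> \<le> (\<Sum>u\<in>U. \<Sum>w\<in>W. \<bar>?pu u * ?pw w\<bar> * (C * \<alpha> ^ G))"
          unfolding abs_mult
          by (intro sum_mono mult_left_mono mixb) auto
        finally show ?thesis .
      qed
      also have "\<dots> = (\<Sum>u\<in>U. \<bar>?pu u\<bar>) * (\<Sum>w\<in>W. \<bar>?pw w\<bar>) * (C * \<alpha> ^ G)"
        by (simp add: sum_distrib_right sum_distrib_left abs_mult mult.assoc, rule sum.swap)
      also have "\<dots> = K ^ card T1 * K ^ card T2 * (C * \<alpha> ^ G)"
        unfolding U_def W_def K_def using sum_abs_PiE[OF assms(3) fin12(1)] sum_abs_PiE[OF assms(3) fin12(2)] by simp
      also have "\<dots> = C * K ^ (2*k) * \<alpha> ^ G"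
        using card12 by (simp add: power_add[symmetric])
      finally show ?thesis using eq by simp
    qed
    have second: "\<alpha> ^ G \<le> (\<Prod>l\<in>{1..k}. (\<alpha> powr (1 / real k)) ^ g l)"
    proof (cases "\<alpha> = 0")
      case True
      show ?thesis
      proof (cases "G = 0")
        case True
        then have "\<And>j. j \<in> {1..k} \<Longrightarrow> g j = 0" using gle by fastforce
        then show ?thesis using True by simp
      next
        case False
        then have "\<alpha> ^ G = 0" using \<open>\<alpha> = 0\<close> by simp
        moreover have "(\<Prod>l\<in>{1..k}. (\<alpha> powr (1 / real k)) ^ g l) \<ge> 0"
          by (intro prod_nonneg zero_le_power) simp
        ultimately show ?thesis by linarith
      qed
    next
      case False
      then have apos: "\<alpha> > 0" using assms(9) by simp
      have "(\<Prod>l\<in>{1..k}. (\<alpha> powr (1 / real k)) ^ g l) = (\<Prod>l\<in>{1..k}. \<alpha> powr (real (g l) * (1 / real k)))"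
        using apos by (intro prod.cong refl) (simp add: powr_power)
      also have "\<dots> = \<alpha> powr (\<Sum>l\<in>{1..k}. real (g l) * (1 / real k))"
        using apos by (simp add: powr_sum)
      also have "\<alpha> ^ G = \<alpha> powr real G" using apos by (simp add: powr_realpow)
      moreover have "\<alpha> powr real G \<le> \<alpha> powr (\<Sum>l\<in>{1..k}. real (g l) * (1 / real k))"
      proof (rule powr_mono')
        have "(\<Sum>l\<in>{1..k}. real (g l) * (1 / real k)) = (\<Sum>l\<in>{1..k}. real (g l)) / real k"
          by (simp add: sum_divide_distrib)
        also have "\<dots> \<le> (real k * real G) / real k"
        proof (intro divide_right_mono)
          have "(\<Sum>l\<in>{1..k}. real (g l)) \<le> (\<Sum>l\<in>{1..k}. real G)"
            using gle by (intro sum_mono) auto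
          then show "(\<Sum>l\<in>{1..k}. real (g l)) \<le> real k * real G" by simp
        qed simp
        also have "\<dots> = real G" using k by simp
        finally show "(\<Sum>l\<in>{1..k}. real (g l) * (1 / real k)) \<le> real G" .
      qed (use assms(9,10) in auto)
      ultimately show ?thesis by simp
    qed
    show "\<bar>integral\<^sup>L M (\<lambda>\<omega>. \<Prod>t\<in>{1..2*k}. a (i t) \<omega>)\<bar>
              \<le> C * K ^ (2*k) * \<alpha> ^ Max ((\<lambda>l. i (2*l) - i (2*l - 1)) ` {1..k})
           \<and> C * K ^ (2*k) * \<alpha> ^ Max ((\<lambda>l. i (2*l) - i (2*l - 1)) ` {1..k})
              \<le> C * K ^ (2*k) * (\<Prod>l\<in>{1..k}. (\<alpha> powr (1 / real k)) ^ (i (2*l) - i (2*l - 1)))"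
      using main mult_left_mono[OF second Ck0] unfolding G_def g_def by simp
  qed
qed

end
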